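(* Let $a,b,c\in\mathbb C$ satisfy $b^2=ac+1$ or $b^2=ac-1$. In the field of rational functions $\mathbb C(x_1,\ldots,x_n)$, define for $1\le i,j\le n$ $$f[x_ix_j]=\frac{x_i-x_j}{c+b(x_i+x_j)+a\,x_ix_j}.$$ Then for every even $n$, $$f[x_1x_2\ldots x_n]=\prod_{1\le i<j\le n}\frac{x_i-x_j}{c+b(x_i+x_j)+a\,x_ix_j}.$$ Special cases include $\frac{x-y}{1-xy}$ (take $a=-1$, $b=0$, $c=1$) and $\frac{x-y}{c+x+y}$ for any constant $c$ (take $a=0$, $b=1$).
   Context: Here $f[x_1\ldots x_n]$ denotes the Pfaffian $$f[x_1\ldots x_n]=\sum s(x_1\ldots x_n,y_1\ldots y_n)\,f[y_1y_2]\cdots f[y_{n-1}y_n],$$ where the sum is over all partitions of $\{x_1,\ldots,x_n\}$ into pairs $\{y_1,y_2\},\ldots,\{y_{n-1},y_n\}$. The sign $s(x_1\ldots x_n,y_1\ldots y_n)$ is the sign of the permutation taking $x_1\ldots x_n$ to $y_1\ldots y_n$, and each summand is independent of how the pairing is listed. The denominators are nonzero polynomials, since $(a,b,c)\neq(0,0,0)$. *)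

theory Defs
  imports Complex_Main "HOL-Combinatorics.Permutations"
begin

text \<open>Pfaffian of the pairing function F on the index set {0..<n}:
  sum over all partitions of {0..<n} into pairs. Each pairing is listed
  canonically as y_0 y_1, y_2 y_3, ... with y_(2k) < y_(2k+1) and
  y_0 < y_2 < y_4 < ...; writing y_k = sigma k, the sign is sign sigma.\<close>

definition canonical_pairing :: "nat \<Rightarrow> (nat \<Rightarrow> nat) \<Rightarrow> bool" where
  "canonical_pairing n \<sigma> \<longleftrightarrow>
     \<sigma> permutes {0..<n} \<and>
     (\<forall>k. 2*k+1 < n \<longrightarrow> \<sigma> (2*k) < \<sigma> (2*k+1)) \<and>
     (\<forall>k. 2*k+2 < n \<longrightarrow> \<sigma> (2*k) < \<sigma> (2*k+2))"

definition pfaffian :: "nat \<Rightarrow> (nat \<Rightarrow> nat \<Rightarrow> 'a::comm_ring_1) \<Rightarrow> 'a" where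
  "pfaffian n F = (\<Sum>\<sigma> | canonical_pairing n \<sigma>.
      of_int (sign \<sigma>) * (\<Prod>k<n div 2. F (\<sigma> (2*k)) (\<sigma> (2*k+1))))"

end

theory Submission
  imports Defs "HOL-Analysis.Analysis"
begin


definition ee :: "nat \<Rightarrow> nat \<Rightarrow> nat" where "ee j i = (if i + 1 < j then i + 1 else i + 2)"
definition eei :: "nat \<Rightarrow> nat \<Rightarrow> nat" where "eei j v = (if v < j then v - 1 else v - 2)"
definition rho :: "nat \<Rightarrow> nat \<Rightarrow> nat" where
  "rho j k = (if k = 1 then j else if 2 \<le> k \<and> k \<le> j then k - 1 else k)"
definition sh :: "nat \<Rightarrow> (nat \<Rightarrow> nat) \<Rightarrow> nat \<Rightarrow> nat" where
  "sh m t k = (if 2 \<le> k \<and> k < m + 2 then t (k - 2) + 2 else k)"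

lemma rho_1: "rho 1 = id"
  by (auto simp: rho_def fun_eq_iff)

lemma rho_Suc: "1 \<le> j \<Longrightarrow> rho (Suc j) = Transposition.transpose j (Suc j) \<circ> rho j"
  by (auto simp: rho_def fun_eq_iff Transposition.transpose_def)

lemma rho_props: "1 \<le> j \<Longrightarrow> j < N \<Longrightarrow> rho j permutes {0..<N} \<and> sign (rho j) = (-1)^(j-1)"
proof (induction j rule: dec_induct)
  case base
  have "rho (Suc 0) = id" by (auto simp: rho_def fun_eq_iff)
  then show ?case using permutes_id[of "{0..<N}"] by (simp add: id_def)
next
  case (step j)
  have p: "rho j permutes {0..<N}" and s: "sign (rho j) = (-1)^(j-1)" using step by auto
  have t: "Transposition.transpose j (Suc j) permutes {0..<N}"
    using step by (intro permutes_swap_id) auto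
  have "rho (Suc j) permutes {0..<N}" using rho_Suc[OF step(1)] permutes_compose[OF p t] by simp
  moreover have "sign (rho (Suc j)) = (-1)^(Suc j - 1)"
  proof -
    have "sign (rho (Suc j)) = sign (Transposition.transpose j (Suc j)) * sign (rho j)"
      unfolding rho_Suc[OF step(1)]
      by (rule sign_compose[OF permutation_swap_id permutes_imp_permutation[OF _ p]]) simp
    also have "\<dots> = - ((-1)^(j-1))" using s by (simp add: sign_swap_id)
    also have "\<dots> = (-1)^(Suc j - 1)" using step(1) by (cases j) auto
    finally show ?thesis .
  qed
  ultimately show ?case by blast
qed

lemma sh_eq: "t permutes {0..<m} \<Longrightarrow> sh m t = map_permutation {0..<m} (\<lambda>k. k + 2) t"
proof -
  have img: "(\<lambda>k. k + 2) ` {0..<m} = {2..<m+2}"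
  proof (rule set_eqI, rule iffI)
    fix x assume "x \<in> (\<lambda>k. k+2) ` {0..<m}" then show "x \<in> {2..<m+2}" by auto
  next
    fix x assume "x \<in> {2..<m+2}" then have "x = (x-2)+2" "x-2 \<in> {0..<m}" by auto
    then show "x \<in> (\<lambda>k. k+2) ` {0..<m}" by (metis imageI)
  qed
  have inv: "k \<in> {2..<m+2} \<Longrightarrow> inv_into {0..<m} (\<lambda>k. k + 2) k = k - 2" for k
    by (rule inv_into_f_eq) (auto simp: inj_on_def)
  have inv2: "2 \<le> k \<Longrightarrow> k < Suc (Suc m) \<Longrightarrow> inv_into {0..<m} (\<lambda>k. Suc (Suc k)) k = k - 2" for k
    using inv[of k] by simp
  have img2: "(\<lambda>k. Suc (Suc k)) ` {0..<m} = {2..<Suc (Suc m)}" using img by simp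
  show ?thesis
    by (auto simp: fun_eq_iff sh_def map_permutation_def restrict_id_def img2 inv2)
qed

lemma sh_props: "t permutes {0..<m} \<Longrightarrow> sh m t permutes {0..<m+2} \<and> sign (sh m t) = sign t"
proof -
  assume t: "t permutes {0..<m}"
  have "sign (sh m t) = sign t" using sh_eq[OF t] sign_map_permutation[of "\<lambda>k. k+2" "{0..<m}" t] t
    by (simp add: inj_on_def)
  moreover have "sh m t permutes {0..<m+2}"
  proof (rule bij_imp_permutes)
    have "inj_on (sh m t) {0..<m+2}"
    proof (rule inj_onI)
      fix u v assume u: "u \<in> {0..<m+2}" and v: "v \<in> {0..<m+2}" and e: "sh m t u = sh m t v"
      have tv: "\<And>k. k < m \<Longrightarrow> t k < m" using t permutes_in_image by fastforce
      have ti: "\<And>k l. k < m \<Longrightarrow> l < m \<Longrightarrow> t k = t l \<Longrightarrow> k = l"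
        using t by (metis permutes_inj inj_eq)
      show "u = v"
      proof (cases "2 \<le> u \<and> 2 \<le> v")
        case True
        then have "u - 2 < m" "v - 2 < m" using u v by auto
        then show ?thesis using e True ti[of "u-2" "v-2"] u v unfolding sh_def by auto
      next
        case False
        then show ?thesis using e u v tv unfolding sh_def by (auto split: if_splits)
      qed
    qed
    moreover have "sh m t ` {0..<m+2} \<subseteq> {0..<m+2}"
      using t permutes_in_image by (fastforce simp: sh_def)
    ultimately show "bij_betw (sh m t) {0..<m+2} {0..<m+2}"
      using endo_inj_surj[of "{0..<m+2}" "sh m t"] by (simp add: bij_betw_def)
  qed (simp add: sh_def)
  ultimately show ?thesis by blast
qed


definition Phi :: "nat \<Rightarrow> nat \<Rightarrow> (nat \<Rightarrow> nat) \<Rightarrow> nat \<Rightarrow> nat" where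
  "Phi m j t = rho j \<circ> sh m t"

lemma Phi_0: "Phi m j t 0 = 0" by (simp add: Phi_def rho_def sh_def)
lemma Phi_1: "Phi m j t (Suc 0) = j" by (simp add: Phi_def rho_def sh_def)
lemma Phi_Suc_Suc: "k < m \<Longrightarrow> Phi m j t (Suc (Suc k)) = ee j (t k)"
  by (simp add: Phi_def rho_def sh_def ee_def)

lemma ee_mono: "u < v \<Longrightarrow> ee j u < ee j v" by (simp add: ee_def)
lemma ee_pos: "0 < ee j u" by (simp add: ee_def)
lemma ee_ne: "ee j u \<noteq> j" by (simp add: ee_def)
lemma ee_eei: "1 \<le> j \<Longrightarrow> 1 \<le> v \<Longrightarrow> v \<noteq> j \<Longrightarrow> ee j (eei j v) = v" by (auto simp: ee_def eei_def)
lemma eei_ee: "eei j (ee j u) = u" by (auto simp: ee_def eei_def)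
lemma eei_mono: "1 \<le> j \<Longrightarrow> 1 \<le> v \<Longrightarrow> v \<noteq> j \<Longrightarrow> 1 \<le> w \<Longrightarrow> w \<noteq> j \<Longrightarrow> v < w \<Longrightarrow> eei j v < eei j w"
  by (auto simp: eei_def)

lemma canon_perm: "canonical_pairing n s \<Longrightarrow> s permutes {0..<n}"
  by (simp add: canonical_pairing_def)

lemma canon_Phi:
  assumes j: "1 \<le> j" "j \<le> m + 1" and t: "canonical_pairing m t"
  shows "canonical_pairing (m + 2) (Phi m j t)"
proof -
  have tp: "t permutes {0..<m}" using t canon_perm by blast
  have p: "Phi m j t permutes {0..<m+2}" unfolding Phi_def
    using permutes_compose[OF conjunct1[OF sh_props[OF tp]] conjunct1[OF rho_props[of j "m+2"]]] j
    by simp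
  have c1: "Phi m j t (2*k) < Phi m j t (2*k+1)" if "2*k+1 < m+2" for k
  proof (cases k)
    case 0 then show ?thesis using j by (simp add: Phi_0 Phi_1)
  next
    case (Suc k')
    then have "2*k'+1 < m" using that by simp
    then have "t (2*k') < t (2*k'+1)" using t by (simp add: canonical_pairing_def)
    moreover have "2*k = Suc (Suc (2*k'))" "2*k+1 = Suc (Suc (2*k'+1))" using Suc by auto
    ultimately show ?thesis using \<open>2*k'+1 < m\<close> by (simp add: Phi_Suc_Suc ee_mono)
  qed
  have c2: "Phi m j t (2*k) < Phi m j t (2*k+2)" if "2*k+2 < m+2" for k
  proof (cases k)
    case 0 then show ?thesis using that by (simp add: Phi_0 Phi_Suc_Suc ee_pos numeral_2_eq_2)
  next
    case (Suc k')
    then have "2*k'+2 < m" using that by simp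
    then have "t (2*k') < t (2*k'+2)" using t by (simp add: canonical_pairing_def)
    moreover have "2*k = Suc (Suc (2*k'))" "2*k+2 = Suc (Suc (2*k'+2))" using Suc by auto
    ultimately show ?thesis using \<open>2*k'+2 < m\<close> by (simp add: Phi_Suc_Suc ee_mono)
  qed
  show ?thesis using p c1 c2 by (simp add: canonical_pairing_def)
qed

lemma canon_0:
  assumes s: "canonical_pairing n s" and n: "0 < n"
  shows "s 0 = 0"
proof -
  have ev: "s 0 \<le> s (2*k)" if "2*k < n" for k
    using that
  proof (induction k)
    case (Suc k)
    then have "s (2*k) < s (2*k+2)" using s by (simp add: canonical_pairing_def)
    then show ?case using Suc by simp
  qed simp
  have all: "s 0 \<le> s v" if "v < n" for v
  proof (cases "even v")
    case True then obtain k where "v = 2*k" by blast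
    then show ?thesis using ev that by simp
  next
    case False then obtain k where k: "v = 2*k+1" using oddE by blast
    then have "s (2*k) < s (2*k+1)" using s that by (simp add: canonical_pairing_def)
    then show ?thesis using ev[of k] k that by simp
  qed
  have sp: "s permutes {0..<n}" using s canon_perm by blast
  obtain v where "v \<in> {0..<n}" "s v = 0"
    using permutes_surj[OF sp] n by (metis atLeastLessThan_iff image_iff le0 permutes_image sp)
  then show ?thesis using all[of v] by simp
qed


definition Tau :: "nat \<Rightarrow> (nat \<Rightarrow> nat) \<Rightarrow> nat \<Rightarrow> nat" where
  "Tau m s k = (if k < m then eei (s 1) (s (k+2)) else k)"

lemma canon_Tau:
  assumes s: "canonical_pairing (m+2) s"
  shows "1 \<le> s 1 \<and> s 1 \<le> m+1 \<and> canonical_pairing m (Tau m s) \<and> Phi m (s 1) (Tau m s) = s"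
proof -
  have sp: "s permutes {0..<m+2}" using s canon_perm by blast
  have s0: "s 0 = 0" using canon_0[OF s] by simp
  have inj: "s u = s v \<Longrightarrow> u = v" for u v using permutes_inj[OF sp] by (simp add: inj_eq)
  have range: "v < m+2 \<Longrightarrow> s v < m+2" for v using permutes_in_image[OF sp] by simp
  define j where "j = s 1"
  have j1: "1 \<le> j" using inj[of 1 0] s0 unfolding j_def by fastforce
  have jm: "j \<le> m+1" using range[of 1] unfolding j_def by simp
  have vals: "1 \<le> s (k+2) \<and> s (k+2) \<noteq> j \<and> s (k+2) < m+2" if "k < m" for k
    using inj[of "k+2" 0] inj[of "k+2" 1] range[of "k+2"] that s0 unfolding j_def by fastforce
  have tau_lt: "Tau m s k < m" if "k < m" for k
    using vals[OF that] jm that unfolding Tau_def j_def[symmetric] by (auto simp: eei_def)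
  have tp: "Tau m s permutes {0..<m}"
  proof (rule bij_imp_permutes)
    have "inj_on (Tau m s) {0..<m}"
    proof (rule inj_onI)
      fix u v assume u: "u \<in> {0..<m}" and v: "v \<in> {0..<m}" and e: "Tau m s u = Tau m s v"
      have "ee j (Tau m s u) = ee j (Tau m s v)" using e by simp
      then have "s (u+2) = s (v+2)" using u v vals[of u] vals[of v] j1
        unfolding Tau_def j_def[symmetric] by (simp add: ee_eei)
      then show "u = v" using inj by fastforce
    qed
    moreover have "Tau m s ` {0..<m} \<subseteq> {0..<m}" using tau_lt by auto
    ultimately show "bij_betw (Tau m s) {0..<m} {0..<m}"
      using endo_inj_surj[of "{0..<m}" "Tau m s"] by (simp add: bij_betw_def)
  qed (simp add: Tau_def)
  have cs1: "\<And>k. 2*k+1 < m+2 \<Longrightarrow> s (2*k) < s (2*k+1)"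
    and cs2: "\<And>k. 2*k+2 < m+2 \<Longrightarrow> s (2*k) < s (2*k+2)"
    using s unfolding canonical_pairing_def by blast+
  have tv: "k < m \<Longrightarrow> Tau m s k = eei j (s (Suc (Suc k)))" for k by (simp add: Tau_def j_def)
  have c1: "Tau m s (2*k) < Tau m s (2*k+1)" if "2*k+1 < m" for k
  proof -
    have "s (2*(k+1)) < s (2*(k+1)+1)" using cs1[of "k+1"] that by simp
    then have "s (Suc (Suc (2*k))) < s (Suc (Suc (2*k+1)))" by simp
    then show ?thesis using that vals[of "2*k"] vals[of "2*k+1"] tv[of "2*k"] tv[of "2*k+1"] j1
      by (simp add: eei_mono)
  qed
  have c2: "Tau m s (2*k) < Tau m s (2*k+2)" if "2*k+2 < m" for k
  proof -
    have "s (2*(k+1)) < s (2*(k+1)+2)" using cs2[of "k+1"] that by simp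
    then have "s (Suc (Suc (2*k))) < s (Suc (Suc (2*k+2)))" by simp
    then show ?thesis using that vals[of "2*k"] vals[of "2*k+2"] tv[of "2*k"] tv[of "2*k+2"] j1
      by (simp add: eei_mono)
  qed
  have canT: "canonical_pairing m (Tau m s)" using tp c1 c2 by (simp add: canonical_pairing_def)
  have "Phi m j (Tau m s) x = s x" for x
  proof -
    consider "x = 0" | "x = 1" | k where "x = Suc (Suc k)" "k < m" | "x \<ge> m+2"
    proof -
      have "x = 0 \<or> x = 1 \<or> (2 \<le> x \<and> x < m+2) \<or> x \<ge> m+2" by arith
      moreover have "2 \<le> x \<Longrightarrow> x = Suc (Suc (x - 2))" by arith
      ultimately show "(x = 0 \<Longrightarrow> thesis) \<Longrightarrow> (x = 1 \<Longrightarrow> thesis) \<Longrightarrow>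
        (\<And>k. x = Suc (Suc k) \<Longrightarrow> k < m \<Longrightarrow> thesis) \<Longrightarrow> (m + 2 \<le> x \<Longrightarrow> thesis) \<Longrightarrow> thesis"
        by (metis add_less_cancel_right add_2_eq_Suc')
    qed
    then show ?thesis
    proof cases
      case 1 then show ?thesis by (simp add: Phi_0 s0)
    next
      case 2 then show ?thesis by (simp add: Phi_1 j_def)
    next
      case 3 then show ?thesis using vals[of k] j1 by (simp add: Phi_Suc_Suc tv ee_eei)
    next
      case 4
      then have "s x = x" using permutes_not_in[OF sp] by simp
      moreover have "Phi m j (Tau m s) x = x" using 4 jm by (simp add: Phi_def sh_def rho_def)
      ultimately show ?thesis by simp
    qed
  qed
  then show ?thesis using j1 jm canT unfolding j_def by auto
qed

lemma Tau_Phi: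
  assumes j: "1 \<le> j" "j \<le> m + 1" and t: "canonical_pairing m t"
  shows "Tau m (Phi m j t) = t"
proof
  fix k
  have tp: "t permutes {0..<m}" using t canon_perm by blast
  show "Tau m (Phi m j t) k = t k"
    using Phi_Suc_Suc[of "k" m j t] permutes_not_in[OF tp, of k]
    by (auto simp: Tau_def Phi_1 eei_ee)
qed


lemma sign_Phi:
  assumes j: "1 \<le> j" "j \<le> m + 1" and t: "canonical_pairing m t"
  shows "sign (Phi m j t) = (-1)^(j+1) * sign t"
proof -
  have tp: "t permutes {0..<m}" using t canon_perm by blast
  have r: "rho j permutes {0..<m+2}" "sign (rho j) = (-1)^(j-1)" using rho_props[of j "m+2"] j by auto
  have h: "sh m t permutes {0..<m+2}" "sign (sh m t) = sign t" using sh_props[OF tp] by auto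
  have "sign (Phi m j t) = sign (rho j) * sign (sh m t)" unfolding Phi_def
    by (rule sign_compose) (use r h permutes_imp_permutation in auto)
  also have "\<dots> = (-1)^(j+1) * sign t" using r h j by (cases j) auto
  finally show ?thesis .
qed

lemma prod_Phi:
  assumes j: "1 \<le> j" "j \<le> m + 1"
  shows "(\<Prod>k<Suc (Suc m) div 2. F (Phi m j t (2*k)) (Phi m j t (2*k+1))) =
     F 0 j * (\<Prod>k<m div 2. F (ee j (t (2*k))) (ee j (t (2*k+1))))"
proof -
  have "Suc (Suc m) div 2 = Suc (m div 2)" by simp
  then have "(\<Prod>k<Suc (Suc m) div 2. F (Phi m j t (2*k)) (Phi m j t (2*k+1))) =
      F (Phi m j t 0) (Phi m j t 1) * (\<Prod>k<m div 2. F (Phi m j t (2*Suc k)) (Phi m j t (2*Suc k+1)))"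
    by (simp only: prod.lessThan_Suc_shift) simp
  also have "(\<Prod>k<m div 2. F (Phi m j t (2*Suc k)) (Phi m j t (2*Suc k+1))) =
      (\<Prod>k<m div 2. F (ee j (t (2*k))) (ee j (t (2*k+1))))"
  proof (rule prod.cong[OF refl])
    fix k assume "k \<in> {..<m div 2}"
    then have k: "2*k+1 < m" by auto
    have "2 * Suc k = Suc (Suc (2*k))" "2 * Suc k + 1 = Suc (Suc (2*k+1))" by auto
    then show "F (Phi m j t (2*Suc k)) (Phi m j t (2*Suc k+1)) = F (ee j (t (2*k))) (ee j (t (2*k+1)))"
      using k by (simp only: Phi_Suc_Suc)
  qed
  finally show ?thesis by (simp add: Phi_0 Phi_1)
qed

lemma pf_expand:
  "pfaffian (Suc (Suc m)) F =
    (\<Sum>j\<in>{1..m+1}. (-1)^(j+1) * F 0 j * pfaffian m (\<lambda>u v. F (ee j u) (ee j v)))"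
proof -
  let ?g = "\<lambda>s. of_int (sign s) * (\<Prod>k<Suc (Suc m) div 2. F (s (2*k)) (s (2*k+1)))"
  let ?h = "\<lambda>(j, t). ?g (Phi m j t)"
  have "pfaffian (Suc (Suc m)) F = sum ?g {s. canonical_pairing (Suc (Suc m)) s}"
    by (simp add: pfaffian_def)
  also have "\<dots> = sum ?h ({1..m+1} \<times> {t. canonical_pairing m t})"
  proof (rule sum.reindex_bij_witness[where i = "\<lambda>(j, t). Phi m j t" and j = "\<lambda>s. (s 1, Tau m s)"])
    fix s assume "s \<in> {s. canonical_pairing (Suc (Suc m)) s}"
    then have c: "canonical_pairing (m+2) s" by simp
    show "(case (s 1, Tau m s) of (j, t) \<Rightarrow> Phi m j t) = s" using canon_Tau[OF c] by simp
    show "(s 1, Tau m s) \<in> {1..m + 1} \<times> {t. canonical_pairing m t}" using canon_Tau[OF c] by simp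
    show "?h (s 1, Tau m s) = ?g s" using canon_Tau[OF c] by simp
  next
    fix b assume "b \<in> {1..m + 1} \<times> {t. canonical_pairing m t}"
    then obtain j t where b: "b = (j, t)" "1 \<le> j" "j \<le> m+1" "canonical_pairing m t" by auto
    show "(case b of (j, t) \<Rightarrow> Phi m j t) \<in> {s. canonical_pairing (Suc (Suc m)) s}"
      using canon_Phi[OF b(2,3,4)] b by simp
    show "((case b of (j, t) \<Rightarrow> Phi m j t) 1, Tau m (case b of (j, t) \<Rightarrow> Phi m j t)) = b"
      using Tau_Phi[OF b(2,3,4)] b by (simp add: Phi_1)
  qed
  also have "\<dots> = (\<Sum>j\<in>{1..m+1}. \<Sum>t\<in>{t. canonical_pairing m t}. ?g (Phi m j t))"
    by (simp add: sum.cartesian_product)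
  also have "\<dots> = (\<Sum>j\<in>{1..m+1}. (-1)^(j+1) * F 0 j * pfaffian m (\<lambda>u v. F (ee j u) (ee j v)))"
  proof (rule sum.cong[OF refl])
    fix j assume "j \<in> {1..m+1}"
    then have j: "1 \<le> j" "j \<le> m+1" by auto
    have "(\<Sum>t\<in>{t. canonical_pairing m t}. ?g (Phi m j t)) =
      (\<Sum>t\<in>{t. canonical_pairing m t}. (-1)^(j+1) * F 0 j *
          (of_int (sign t) * (\<Prod>k<m div 2. F (ee j (t (2*k))) (ee j (t (2*k+1))))))"
    proof (rule sum.cong[OF refl])
      fix t assume "t \<in> {t. canonical_pairing m t}"
      then have t: "canonical_pairing m t" by simp
      show "?g (Phi m j t) = (-1)^(j+1) * F 0 j *
          (of_int (sign t) * (\<Prod>k<m div 2. F (ee j (t (2*k))) (ee j (t (2*k+1)))))"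
        unfolding sign_Phi[OF j t] prod_Phi[OF j] by simp
    qed
    also have "\<dots> = (-1)^(j+1) * F 0 j * pfaffian m (\<lambda>u v. F (ee j u) (ee j v))"
      by (simp add: pfaffian_def sum_distrib_left)
    finally show "(\<Sum>t\<in>{t. canonical_pairing m t}. ?g (Phi m j t)) =
        (-1)^(j+1) * F 0 j * pfaffian m (\<lambda>u v. F (ee j u) (ee j v))" .
  qed
  finally show ?thesis .
qed



definition iota :: "nat \<times> nat \<Rightarrow> nat \<times> nat" where
  "iota p = (case p of (j, k) \<Rightarrow> if k + 1 < j then (k + 1, j - 2) else (k + 2, j - 1))"

lemma pf_eqrows:
  fixes F :: "nat \<Rightarrow> nat \<Rightarrow> complex"
  assumes r: "\<And>k. F 0 k = F 1 k" and z: "F 0 1 = 0" and ev: "even m"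
  shows "pfaffian (Suc (Suc m)) F = 0"
proof (cases m)
  case 0
  have z': "F 0 (Suc 0) = 0" using z by simp
  then show ?thesis using 0 by (simp add: pf_expand)
next
  case (Suc m1)
  then obtain m' where m: "m = Suc (Suc m')" using ev by (cases m1) auto
  define H where "H j k = (-1)^(j+k) * F 0 j * F 0 (ee j k) *
      pfaffian m' (\<lambda>u v. F (ee j (ee k u)) (ee j (ee k v)))" for j k
  let ?P = "{2..m'+3} \<times> {1..m'+1}"
  have "pfaffian (Suc (Suc m)) F =
      (\<Sum>j\<in>{1..m+1}. (-1)^(j+1) * F 0 j * pfaffian m (\<lambda>u v. F (ee j u) (ee j v)))"
    by (rule pf_expand)
  also have "{1..m+1} = insert 1 {2..m'+3}" using m by auto
  also have "(\<Sum>j\<in>insert 1 {2..m'+3}. (-1)^(j+1) * F 0 j * pfaffian m (\<lambda>u v. F (ee j u) (ee j v)))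
      = (\<Sum>j\<in>{2..m'+3}. (-1)^(j+1) * F 0 j * pfaffian m (\<lambda>u v. F (ee j u) (ee j v)))"
    using z by simp
  also have "\<dots> = (\<Sum>j\<in>{2..m'+3}. \<Sum>k\<in>{1..m'+1}. H j k)"
  proof (rule sum.cong[OF refl])
    fix j assume "j \<in> {2..m'+3}"
    then have j: "2 \<le> j" by simp
    have e0: "ee j 0 = 1" using j by (simp add: ee_def)
    have "pfaffian m (\<lambda>u v. F (ee j u) (ee j v)) =
      (\<Sum>k\<in>{1..m'+1}. (-1)^(k+1) * F (ee j 0) (ee j k) *
          pfaffian m' (\<lambda>u v. F (ee j (ee k u)) (ee j (ee k v))))"
      unfolding m by (rule pf_expand)
    also have "\<dots> = (\<Sum>k\<in>{1..m'+1}. (-1)^(k+1) * F 0 (ee j k) *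
          pfaffian m' (\<lambda>u v. F (ee j (ee k u)) (ee j (ee k v))))"
    proof -
      have r': "\<And>k. F (Suc 0) k = F 0 k" using r by simp
      show ?thesis by (simp add: e0 r')
    qed
    finally have pe: "pfaffian m (\<lambda>u v. F (ee j u) (ee j v)) = (\<Sum>k\<in>{1..m'+1}. (-1)^(k+1) * F 0 (ee j k) *
          pfaffian m' (\<lambda>u v. F (ee j (ee k u)) (ee j (ee k v))))" .
    show "(-1)^(j+1) * F 0 j * pfaffian m (\<lambda>u v. F (ee j u) (ee j v)) = (\<Sum>k\<in>{1..m'+1}. H j k)"
      unfolding pe sum_distrib_left H_def
      by (rule sum.cong[OF refl]) (simp add: power_add algebra_simps)
  qed
  also have "\<dots> = (\<Sum>p\<in>?P. H (fst p) (snd p))"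
    unfolding sum.cartesian_product by (rule sum.cong) auto
  finally have eq: "pfaffian (Suc (Suc m)) F = (\<Sum>p\<in>?P. H (fst p) (snd p))" .
  have inv: "p \<in> ?P \<Longrightarrow> iota (iota p) = p" for p
    by (cases p) (auto simp: iota_def)
  have inP: "p \<in> ?P \<Longrightarrow> iota p \<in> ?P" for p
    by (cases p) (auto simp: iota_def)
  have anti: "p \<in> ?P \<Longrightarrow> H (fst (iota p)) (snd (iota p)) = - H (fst p) (snd p)" for p
  proof -
    assume p: "p \<in> ?P"
    obtain j k where jk: "p = (j, k)" by (cases p)
    have j: "2 \<le> j" "j \<le> m'+3" and k: "1 \<le> k" "k \<le> m'+1" using p jk by auto
    show ?thesis
    proof (cases "k + 1 < j")
      case True
      have i: "iota p = (k+1, j-2)" using True jk by (simp add: iota_def)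
      have e1: "ee j k = k + 1" using True by (simp add: ee_def; arith)
      have e2: "ee (k+1) (j-2) = j" using True by (simp add: ee_def; arith)
      have e3: "ee (k+1) (ee (j-2) u) = ee j (ee k u)" for u using True k by (simp add: ee_def; arith)
      have s: "(-1::complex)^(k+1+(j-2)) = - ((-1)^(j+k))"
      proof -
        have "j + k = Suc (k+1+(j-2))" using True by simp
        then show ?thesis by (simp only:) simp
      qed
      have "H (fst (iota p)) (snd (iota p)) = H (k+1) (j-2)" using i by simp
      also have "\<dots> = - H j k" unfolding H_def using e1 e2 e3 s by simp
      finally show ?thesis using jk by simp
    next
      case False
      have i: "iota p = (k+2, j-1)" using False jk by (simp add: iota_def)
      have e1: "ee j k = k + 2" using False by (simp add: ee_def; arith)
      have e2: "ee (k+2) (j-1) = j" using False j by (simp add: ee_def; arith)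
      have e3: "ee (k+2) (ee (j-1) u) = ee j (ee k u)" for u using False k j by (simp add: ee_def; arith)
      have s: "(-1::complex)^(k+2+(j-1)) = - ((-1)^(j+k))"
      proof -
        have "k+2+(j-1) = Suc (j + k)" using j by simp
        then show ?thesis by (simp only:) simp
      qed
      have "H (fst (iota p)) (snd (iota p)) = H (k+2) (j-1)" using i by simp
      also have "\<dots> = - H j k" unfolding H_def using e1 e2 e3 s by simp
      finally show ?thesis using jk by simp
    qed
  qed
  have "(\<Sum>p\<in>?P. - H (fst p) (snd p)) = (\<Sum>p\<in>?P. H (fst p) (snd p))"
    by (rule sum.reindex_bij_witness[where i = iota and j = iota]) (use inv inP anti in auto)
  then have "(\<Sum>p\<in>?P. H (fst p) (snd p)) = 0" by (simp add: sum_negf)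
  then show ?thesis using eq by simp
qed



definition prodp :: "nat \<Rightarrow> (nat \<Rightarrow> nat \<Rightarrow> 'a::comm_monoid_mult) \<Rightarrow> 'a" where
  "prodp n G = (\<Prod>i<n. \<Prod>j\<in>{i<..<n}. G i j)"

definition dd :: "nat \<Rightarrow> nat \<Rightarrow> nat" where "dd p i = (if i < p then i else Suc i)"

definition Pr :: "nat \<Rightarrow> (nat \<times> nat) set" where "Pr N = {(i, j). i < j \<and> j < N}"

lemma finite_Pr: "finite (Pr N)"
  by (rule finite_subset[of _ "{..<N} \<times> {..<N}"]) (auto simp: Pr_def)

lemma prodp_Pr: "prodp N G = (\<Prod>(i,j)\<in>Pr N. G i j)"
proof -
  have "Sigma {..<N} (\<lambda>i. {i<..<N}) = Pr N" by (auto simp: Pr_def)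
  then show ?thesis unfolding prodp_def by (subst prod.Sigma) auto
qed

lemma Pr_split:
  assumes p: "p < Suc N"
  shows "Pr (Suc N) = ((\<lambda>i. (i, p)) ` {..<p} \<union> (\<lambda>j. (p, j)) ` {p<..<Suc N}) \<union>
                (\<lambda>(i,j). (dd p i, dd p j)) ` Pr N"
proof (rule set_eqI)
  fix q :: "nat \<times> nat"
  obtain i j where q: "q = (i, j)" by (cases q)
  show "q \<in> Pr (Suc N) \<longleftrightarrow> q \<in> ((\<lambda>i. (i, p)) ` {..<p} \<union> (\<lambda>j. (p, j)) ` {p<..<Suc N}) \<union>
                (\<lambda>(i,j). (dd p i, dd p j)) ` Pr N"
  proof
    assume "q \<in> Pr (Suc N)"
    then have ij: "i < j" "j < Suc N" using q by (auto simp: Pr_def)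
    show "q \<in> ((\<lambda>i. (i, p)) ` {..<p} \<union> (\<lambda>j. (p, j)) ` {p<..<Suc N}) \<union>
                (\<lambda>(i,j). (dd p i, dd p j)) ` Pr N"
    proof (cases "i = p \<or> j = p")
      case True then show ?thesis using ij q by auto
    next
      case False
      define i' where "i' = (if i < p then i else i - 1)"
      define j' where "j' = (if j < p then j else j - 1)"
      have "dd p i' = i" "dd p j' = j" "(i', j') \<in> Pr N" using False ij p
        by (auto simp: dd_def i'_def j'_def Pr_def)
      then have "q \<in> (\<lambda>(i,j). (dd p i, dd p j)) ` Pr N" using q
        by (metis (no_types, lifting) case_prod_conv image_eqI)
      then show ?thesis by blast
    qed
  next
    assume "q \<in> ((\<lambda>i. (i, p)) ` {..<p} \<union> (\<lambda>j. (p, j)) ` {p<..<Suc N}) \<union>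
                (\<lambda>(i,j). (dd p i, dd p j)) ` Pr N"
    then show "q \<in> Pr (Suc N)" using p by (auto simp: Pr_def dd_def)
  qed
qed

lemma prodp_remove:
  fixes G :: "nat \<Rightarrow> nat \<Rightarrow> 'a::comm_ring_1"
  assumes anti: "\<And>i j. G i j = - G j i" and p: "p < Suc N"
  shows "prodp (Suc N) G = (-1)^p * (\<Prod>l\<in>{..<Suc N}-{p}. G p l) * prodp N (\<lambda>i j. G (dd p i) (dd p j))"
proof -
  let ?A = "(\<lambda>i. (i, p)) ` {..<p}" and ?B = "(\<lambda>j. (p, j)) ` {p<..<Suc N}"
  let ?C = "(\<lambda>(i,j). (dd p i, dd p j)) ` Pr N"
  have injd: "inj_on (\<lambda>(i,j). (dd p i, dd p j)) (Pr N)"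
    by (auto simp: inj_on_def dd_def split: if_splits)
  have d1: "?A \<inter> ?B = {}" by auto
  have d2: "(?A \<union> ?B) \<inter> ?C = {}" by (auto simp: dd_def split: if_splits)
  have e0: "prodp (Suc N) G = (\<Prod>(i,j)\<in>?A \<union> ?B \<union> ?C. G i j)"
    unfolding prodp_Pr Pr_split[OF p] ..
  have e1: "(\<Prod>(i,j)\<in>?A \<union> ?B \<union> ?C. G i j) = (\<Prod>(i,j)\<in>?A. G i j) * (\<Prod>(i,j)\<in>?B. G i j) * (\<Prod>(i,j)\<in>?C. G i j)"
    by (subst prod.union_disjoint) (use d1 d2 finite_Pr in \<open>auto simp: prod.union_disjoint\<close>)
  have e2: "(\<Prod>(i,j)\<in>?A. G i j) = (-1)^p * (\<Prod>i<p. G p i)"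
  proof -
    have "(\<Prod>(i,j)\<in>?A. G i j) = (\<Prod>i<p. G i p)"
      by (subst prod.reindex) (auto simp: inj_on_def)
    also have "\<dots> = (\<Prod>i<p. - G p i)" using anti by metis
    also have "\<dots> = (-1)^p * (\<Prod>i<p. G p i)" by (simp add: prod_uminus)
    finally show ?thesis .
  qed
  have e3: "(\<Prod>(i,j)\<in>?B. G i j) = (\<Prod>j\<in>{p<..<Suc N}. G p j)"
    by (subst prod.reindex) (auto simp: inj_on_def)
  have e4: "(\<Prod>(i,j)\<in>?C. G i j) = prodp N (\<lambda>i j. G (dd p i) (dd p j))"
    unfolding prodp_Pr by (subst prod.reindex[OF injd]) (simp add: case_prod_beta)
  have e5: "(\<Prod>l\<in>{..<Suc N}-{p}. G p l) = (\<Prod>i<p. G p i) * (\<Prod>j\<in>{p<..<Suc N}. G p j)"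
  proof -
    have "{..<Suc N}-{p} = {..<p} \<union> {p<..<Suc N}" using p by auto
    then show ?thesis by (metis prod.union_disjoint finite_lessThan finite_greaterThanLessThan
       greaterThanLessThan_iff lessThan_iff disjoint_iff order_less_asym)
  qed
  show ?thesis by (simp only: e0 e1 e2 e3 e4 e5 mult.assoc)
qed

lemma prodp_first:
  "prodp (Suc N) G = (\<Prod>l<N. G 0 (Suc l)) * prodp N (\<lambda>i j. G (Suc i) (Suc j))"
proof -
  have i: "prodp (Suc N) G = (\<Prod>(i,j)\<in>Pr (Suc N). G i j)" by (rule prodp_Pr)
  have "Pr (Suc N) = ((\<lambda>j. (0, j)) ` {0<..<Suc N}) \<union> (\<lambda>(i,j). (Suc i, Suc j)) ` Pr N"
    using Pr_split[of 0 N] by (simp add: dd_def)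
  moreover have "inj_on (\<lambda>(i,j). (Suc i, Suc j)) (Pr N)" by (auto simp: inj_on_def)
  moreover have "((\<lambda>j. (0, j)) ` {0<..<Suc N}) \<inter> (\<lambda>(i,j). (Suc i, Suc j)) ` Pr N = {}" by auto
  ultimately have "prodp (Suc N) G = (\<Prod>j\<in>{0<..<Suc N}. G 0 j) * prodp N (\<lambda>i j. G (Suc i) (Suc j))"
    unfolding i prodp_Pr using finite_Pr
    by (simp add: prod.union_disjoint prod.reindex inj_on_def case_prod_beta)
  also have "(\<Prod>j\<in>{0<..<Suc N}. G 0 j) = (\<Prod>l<N. G 0 (Suc l))"
  proof -
    have "{0<..<Suc N} = Suc ` {..<N}" by (auto simp: image_iff gr0_conv_Suc)
    then show ?thesis by (simp add: prod.reindex)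
  qed
  finally show ?thesis .
qed



definition Qf :: "complex \<Rightarrow> complex \<Rightarrow> complex \<Rightarrow> complex \<Rightarrow> complex \<Rightarrow> complex" where
  "Qf a b c u v = c + b*(u + v) + a*u * v"
definition ff :: "complex \<Rightarrow> complex \<Rightarrow> complex \<Rightarrow> complex \<Rightarrow> complex \<Rightarrow> complex" where
  "ff a b c u v = (u - v) / Qf a b c u v"
definition Fx :: "complex \<Rightarrow> complex \<Rightarrow> complex \<Rightarrow> (nat \<Rightarrow> complex) \<Rightarrow> nat \<Rightarrow> nat \<Rightarrow> complex" where
  "Fx a b c x i j = ff a b c (x i) (x j)"
definition hyp :: "complex \<Rightarrow> complex \<Rightarrow> complex \<Rightarrow> nat \<Rightarrow> (nat \<Rightarrow> complex) \<Rightarrow> bool" where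
  "hyp a b c n x \<longleftrightarrow> (\<forall>i<n. \<forall>j<n. i \<noteq> j \<longrightarrow> Qf a b c (x i) (x j) \<noteq> 0)"

lemma Qf_sym: "Qf a b c u v = Qf a b c v u" by (simp add: Qf_def algebra_simps)
lemma ff_anti: "ff a b c u v = - ff a b c v u"
  by (simp add: ff_def Qf_sym[of a b c u v] minus_divide_left)
lemma ff_same: "ff a b c u u = 0" by (simp add: ff_def)

lemma Q_r:
  assumes hr: "r * (b + a*y) = -(c + b*y)"
  shows "Qf a b c r y = 0"
    and "Qf a b c r z * Qf a b c y z = (b^2 - a*c) * (y - z) * (r - z)"
proof -
  have "Qf a b c r y = (c + b*y) + r*(b + a*y)" by (simp add: Qf_def algebra_simps)
  then show "Qf a b c r y = 0" using hr by simp
  have "Qf a b c y z - (b + a*y)*(z - r) = (c + b*y) + r*(b + a*y)" by (simp add: Qf_def algebra_simps)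
  then have q2: "Qf a b c y z = (b + a*y)*(z - r)" using hr by simp
  have "(b + a*y) * Qf a b c r z = (b + a*y)*(c + b*z) + (r * (b + a*y))*(b + a*z)"
    by (simp add: Qf_def algebra_simps)
  also have "\<dots> = (a*c - b^2)*(y - z)" unfolding hr by (simp add: algebra_simps power2_eq_square)
  finally have q1: "(b + a*y) * Qf a b c r z = (a*c - b^2)*(y - z)" .
  have "Qf a b c r z * Qf a b c y z = ((b + a*y) * Qf a b c r z) * (z - r)" unfolding q2 by (simp add: algebra_simps)
  also have "\<dots> = (b^2 - a*c) * (y - z) * (r - z)" unfolding q1 by (simp add: algebra_simps)
  finally show "Qf a b c r z * Qf a b c y z = (b^2 - a*c) * (y - z) * (r - z)" .
qed

lemma Q_r_ff:
  assumes hr: "r * (b + a*y) = -(c + b*y)" and q: "Qf a b c y z \<noteq> 0"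
  shows "Qf a b c r z = (b^2 - a*c) * (r - z) * ff a b c y z"
  using Q_r(2)[OF hr, of z] q by (simp add: ff_def field_simps)

lemma hyp_sub:
  assumes "hyp a b c n x" "inj_on g {..<m}" "\<And>u. u < m \<Longrightarrow> g u < n"
  shows "hyp a b c m (x \<circ> g)"
  using assms unfolding hyp_def inj_on_def by (metis comp_apply lessThan_iff)

lemma expand_t:
  assumes IH: "\<And>y. hyp a b c m y \<Longrightarrow> pfaffian m (Fx a b c y) = prodp m (Fx a b c y)"
    and h: "hyp a b c (Suc (Suc m)) x"
  shows "pfaffian (Suc (Suc m)) (Fx a b c (x(0 := t))) =
     (\<Sum>p<Suc m. (-1)^p * ff a b c t (x (Suc p)) * prodp m (Fx a b c (\<lambda>u. x (Suc (dd p u)))))"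
proof -
  define G where "G j = (-1)^(j+1) * Fx a b c (x(0 := t)) 0 j *
        pfaffian m (\<lambda>u v. Fx a b c (x(0 := t)) (ee j u) (ee j v))" for j
  have "pfaffian (Suc (Suc m)) (Fx a b c (x(0 := t))) = (\<Sum>j\<in>{1..m+1}. G j)"
    unfolding G_def by (rule pf_expand)
  also have "{1..m+1} = Suc ` {..<Suc m}" by (simp add: image_Suc_lessThan)
  also have "(\<Sum>j\<in>Suc ` {..<Suc m}. G j) = (\<Sum>p<Suc m. G (Suc p))"
    by (simp add: sum.reindex)
  also have "\<dots> = (\<Sum>p<Suc m. (-1)^p * ff a b c t (x (Suc p)) * prodp m (Fx a b c (\<lambda>u. x (Suc (dd p u)))))"
  proof (rule sum.cong[OF refl])
    fix p assume p: "p \<in> {..<Suc m}"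
    have e: "ee (Suc p) u = Suc (dd p u)" for u by (simp add: ee_def dd_def)
    have "(\<lambda>u v. Fx a b c (x(0 := t)) (ee (Suc p) u) (ee (Suc p) v)) = Fx a b c (x \<circ> (\<lambda>u. Suc (dd p u)))"
      by (simp add: fun_eq_iff Fx_def e)
    moreover have "hyp a b c m (x \<circ> (\<lambda>u. Suc (dd p u)))"
      by (rule hyp_sub[OF h]) (auto simp: inj_on_def dd_def split: if_splits)
    ultimately have "pfaffian m (\<lambda>u v. Fx a b c (x(0 := t)) (ee (Suc p) u) (ee (Suc p) v)) =
        prodp m (Fx a b c (\<lambda>u. x (Suc (dd p u))))"
      using IH by (simp add: o_def)
    then show "G (Suc p) =
      (-1)^p * ff a b c t (x (Suc p)) * prodp m (Fx a b c (\<lambda>u. x (Suc (dd p u))))"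
      by (simp add: Fx_def G_def)
  qed
  finally show ?thesis .
qed

lemma deg_prod_lin:
  "finite S \<Longrightarrow> degree (\<Prod>l\<in>S. [:u l, v l:]) \<le> card S"
proof (induction S rule: finite_induct)
  case (insert s S)
  have "degree (\<Prod>l\<in>insert s S. [:u l, v l:]) = degree ([:u s, v s:] * (\<Prod>l\<in>S. [:u l, v l:]))"
    using insert by (subst prod.insert) auto
  also have "\<dots> \<le> degree [:u s, v s:] + degree (\<Prod>l\<in>S. [:u l, v l:])"
    by (rule degree_mult_le)
  also have "\<dots> \<le> 1 + card S" using insert by (intro add_mono) auto
  finally show ?case using insert by simp
qed simp



lemma Fx_anti: "Fx a b c x i j = - Fx a b c x j i"
  unfolding Fx_def by (rule ff_anti)

lemma gen_step:
  assumes eps: "(b^2 - a*c)^2 = 1"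
    and ev: "even m"
    and IH: "\<And>y. hyp a b c m y \<Longrightarrow> pfaffian m (Fx a b c y) = prodp m (Fx a b c y)"
    and h: "hyp a b c (Suc (Suc m)) x"
    and g1: "\<And>i. i < Suc (Suc m) \<Longrightarrow> b + a * x i \<noteq> 0"
    and g2: "\<And>i. i < Suc (Suc m) \<Longrightarrow> Qf a b c (x i) (x i) \<noteq> 0"
    and g3: "inj_on x {..<Suc (Suc m)}"
  shows "pfaffian (Suc (Suc m)) (Fx a b c x) = prodp (Suc (Suc m)) (Fx a b c x)"
proof -
  define N where "N = Suc m"
  define y where "y l = x (Suc l)" for l
  define D where "D p = prodp m (Fx a b c (\<lambda>u. x (Suc (dd p u))))" for p
  define C where "C = prodp N (Fx a b c y)"
  define A where "A p = (\<Prod>l\<in>{..<N}-{p}. ff a b c (y p) (y l))" for p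
  define L where "L t = (\<Sum>p<N. (-1)^p * ff a b c t (y p) * D p)" for t
  define R where "R t = (\<Prod>l<N. ff a b c t (y l)) * C" for t
  define P where "P t = (\<Sum>p<N. (-1)^p * (t - y p) * (\<Prod>l\<in>{..<N}-{p}. Qf a b c t (y l)) * D p)
       - (\<Prod>l<N. (t - y l)) * C" for t
  define r where "r k = -(c + b * y k)/(b + a * y k)" for k
  define \<epsilon> where "\<epsilon> = b^2 - a*c"
  have hr: "r k * (b + a * y k) = -(c + b * y k)" if "k < N" for k
    using g1[of "Suc k"] that unfolding r_def y_def N_def by simp
  have hy: "Qf a b c (y k) (y l) \<noteq> 0" if "k < N" "l < N" "k \<noteq> l" for k l
    using h that unfolding hyp_def y_def N_def by auto
  have gy: "Qf a b c (y k) (y k) \<noteq> 0" if "k < N" for k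
    using g2[of "Suc k"] that unfolding y_def N_def by simp
  have yinj: "k = l" if "k < N" "l < N" "y k = y l" for k l
    using inj_onD[OF g3, of "Suc k" "Suc l"] that unfolding y_def N_def by simp
  have CA: "C = (-1)^p * A p * D p" if "p < N" for p
  proof -
    have "C = (-1)^p * (\<Prod>l\<in>{..<Suc m}-{p}. Fx a b c y p l) * prodp m (\<lambda>i j. Fx a b c y (dd p i) (dd p j))"
      unfolding C_def N_def by (rule prodp_remove[OF Fx_anti]) (use that in \<open>simp add: N_def\<close>)
    moreover have "(\<lambda>i j. Fx a b c y (dd p i) (dd p j)) = Fx a b c (\<lambda>u. x (Suc (dd p u)))"
      by (simp add: fun_eq_iff Fx_def y_def)
    moreover have "(\<Prod>l\<in>{..<Suc m}-{p}. Fx a b c y p l) = A p" by (simp add: A_def Fx_def N_def)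
    ultimately show ?thesis unfolding D_def by simp
  qed
  have expand: "pfaffian (Suc (Suc m)) (Fx a b c (x(0:=t))) = L t" for t
    unfolding L_def D_def y_def N_def by (rule expand_t[OF IH h])
  have prodR: "prodp (Suc (Suc m)) (Fx a b c x) = R (x 0)"
  proof -
    have "(\<lambda>i j. Fx a b c x (Suc i) (Suc j)) = Fx a b c y" by (simp add: fun_eq_iff Fx_def y_def)
    then show ?thesis
      unfolding R_def C_def N_def by (subst prodp_first) (simp add: Fx_def y_def)
  qed
  have PLR: "P t = (L t - R t) * (\<Prod>l<N. Qf a b c t (y l))" if nz: "\<forall>l<N. Qf a b c t (y l) \<noteq> 0" for t
  proof -
    have t1: "ff a b c t (y p) * (\<Prod>l<N. Qf a b c t (y l)) = (t - y p) * (\<Prod>l\<in>{..<N}-{p}. Qf a b c t (y l))"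
      if "p < N" for p
    proof -
      have "(\<Prod>l<N. Qf a b c t (y l)) = Qf a b c t (y p) * (\<Prod>l\<in>{..<N}-{p}. Qf a b c t (y l))"
        using that by (simp add: prod.remove)
      then show ?thesis using nz that by (simp add: ff_def)
    qed
    have t2: "(\<Prod>l<N. ff a b c t (y l)) * (\<Prod>l<N. Qf a b c t (y l)) = (\<Prod>l<N. (t - y l))"
      unfolding prod.distrib[symmetric] using nz by (intro prod.cong) (auto simp: ff_def)
    have "(L t - R t) * (\<Prod>l<N. Qf a b c t (y l)) =
        (\<Sum>p<N. (-1)^p * D p * (ff a b c t (y p) * (\<Prod>l<N. Qf a b c t (y l))))
        - ((\<Prod>l<N. ff a b c t (y l)) * (\<Prod>l<N. Qf a b c t (y l))) * C"
      unfolding L_def R_def left_diff_distrib sum_distrib_right by (simp add: mult_ac)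
    also have "\<dots> = P t"
      unfolding P_def t2
      by (rule arg_cong2[where f = "(-)"], rule sum.cong[OF refl]) (simp_all add: t1 mult_ac)
    finally show ?thesis by simp
  qed
  have epsm: "\<epsilon>^m = 1"
  proof -
    obtain q where "m = 2*q" using ev by blast
    then show ?thesis using eps unfolding \<epsilon>_def by (simp add: power_mult)
  qed
  have eps0: "\<epsilon> \<noteq> 0" using eps unfolding \<epsilon>_def by auto
  have cardm: "card ({..<N}-{k}) = m" if "k < N" for k using that by (simp add: N_def)
  have Pr: "P (r k) = 0" if k: "k < N" for k
  proof -
    have z: "Qf a b c (r k) (y k) = 0" using Q_r(1)[OF hr[OF k]] .
    define T where "T p = (-1)^p * (r k - y p) * (\<Prod>l\<in>{..<N}-{p}. Qf a b c (r k) (y l)) * D p" for p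
    have other: "T p = 0" if "p < N" "p \<noteq> k" for p
    proof -
      have "(\<Prod>l\<in>{..<N}-{p}. Qf a b c (r k) (y l)) = 0"
        by (rule prod_zero) (use z that k in auto)
      then show ?thesis by (simp add: T_def)
    qed
    have sumk: "(\<Sum>p<N. T p) = T k"
      using k other by (subst sum.remove[of _ k]) (auto intro!: sum.neutral)
    have prodQ: "(\<Prod>l\<in>{..<N}-{k}. Qf a b c (r k) (y l)) =
        (\<Prod>l\<in>{..<N}-{k}. (r k - y l)) * A k"
    proof -
      have "(\<Prod>l\<in>{..<N}-{k}. Qf a b c (r k) (y l)) =
          (\<Prod>l\<in>{..<N}-{k}. \<epsilon> * ((r k - y l) * ff a b c (y k) (y l)))"
        by (rule prod.cong[OF refl]) (use Q_r_ff[OF hr[OF k] hy[OF k]] in \<open>auto simp: \<epsilon>_def mult_ac\<close>)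
      also have "\<dots> = \<epsilon>^m * ((\<Prod>l\<in>{..<N}-{k}. (r k - y l)) * A k)"
        by (simp add: prod.distrib cardm[OF k] A_def)
      finally show ?thesis using epsm by simp
    qed
    have "T k = (-1)^k * A k * D k * ((r k - y k) * (\<Prod>l\<in>{..<N}-{k}. (r k - y l)))"
      unfolding T_def prodQ by (simp add: mult_ac)
    also have "\<dots> = C * (\<Prod>l<N. (r k - y l))"
      using CA[OF k] k by (simp add: prod.remove)
    finally have "T k = (\<Prod>l<N. (r k - y l)) * C" by (simp add: mult_ac)
    then show ?thesis unfolding P_def using sumk T_def by simp
  qed
  have Py: "P (y 0) = 0"
  proof -
    have nz: "\<forall>l<N. Qf a b c (y 0) (y l) \<noteq> 0"
      using gy hy by (metis N_def zero_less_Suc)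
    have "pfaffian (Suc (Suc m)) (Fx a b c (x(0 := x 1))) = 0"
      by (rule pf_eqrows[OF _ _ ev]) (simp_all add: Fx_def ff_same)
    then have L0: "L (y 0) = 0" using expand[of "y 0"] by (simp add: y_def)
    have "(\<Prod>l<N. ff a b c (y 0) (y l)) = 0"
      by (rule prod_zero) (simp, rule bexI[of _ 0], simp_all add: ff_same N_def)
    then have R0: "R (y 0) = 0" by (simp add: R_def)
    show ?thesis using PLR[OF nz] L0 R0 by simp
  qed
  define pp where "pp = (\<Sum>p<N. smult ((-1)^p * D p) ([:- y p, 1:] *
       (\<Prod>l\<in>{..<N}-{p}. [:c + b * y l, b + a * y l:]))) - smult C (\<Prod>l<N. [:- y l, 1:])"
  have lin: "poly [:c + b * y l, b + a * y l:] t = Qf a b c t (y l)" for l t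
    by (simp add: Qf_def algebra_simps)
  have ppP: "poly pp t = P t" for t
  proof -
    have l1: "poly [:- y p, 1:] t = t - y p" for p by simp
    show ?thesis
      unfolding pp_def P_def poly_diff poly_sum poly_smult poly_mult poly_prod lin l1
      by (simp add: mult_ac)
  qed
  have degpp: "degree pp \<le> N"
    unfolding pp_def
  proof (rule degree_diff_le)
    show "degree (\<Sum>p<N. smult ((-1)^p * D p) ([:- y p, 1:] *
       (\<Prod>l\<in>{..<N}-{p}. [:c + b * y l, b + a * y l:]))) \<le> N"
    proof (rule degree_sum_le)
      fix p assume p: "p \<in> {..<N}"
      have "degree (smult ((-1)^p * D p) ([:- y p, 1:] * (\<Prod>l\<in>{..<N}-{p}. [:c + b * y l, b + a * y l:])))
          \<le> degree ([:- y p, 1:] * (\<Prod>l\<in>{..<N}-{p}. [:c + b * y l, b + a * y l:]))"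
        by (rule degree_smult_le)
      also have "\<dots> \<le> degree [:- y p, 1:] + degree (\<Prod>l\<in>{..<N}-{p}. [:c + b * y l, b + a * y l:])"
        by (rule degree_mult_le)
      also have "\<dots> \<le> 1 + card ({..<N}-{p})"
        by (intro add_mono deg_prod_lin) auto
      also have "\<dots> = N" using cardm p by (simp add: N_def)
      finally show "degree (smult ((-1)^p * D p) ([:- y p, 1:] * (\<Prod>l\<in>{..<N}-{p}. [:c + b * y l, b + a * y l:])))
          \<le> N" .
    qed simp
    show "degree (smult C (\<Prod>l<N. [:- y l, 1:])) \<le> N"
      using order.trans[OF degree_smult_le deg_prod_lin[of "{..<N}" "\<lambda>l. - y l" "\<lambda>l. 1"]] by simp
  qed
  have rinj: "inj_on r {..<N}"
  proof (rule inj_onI)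
    fix k l assume k: "k \<in> {..<N}" and l: "l \<in> {..<N}" and e: "r k = r l"
    have "Qf a b c (r k) (y l) = 0" using e Q_r(1)[OF hr[of l]] l by simp
    then have "\<epsilon> * (y k - y l) * (r k - y l) = 0" using Q_r(2)[OF hr[of k], of "y l"] k
      by (simp add: \<epsilon>_def)
    then have "y k = y l \<or> r k = y l" using eps0 by simp
    then show "k = l"
    proof
      assume "y k = y l" then show ?thesis using yinj k l by simp
    next
      assume "r k = y l"
      then have "Qf a b c (y l) (y l) = 0" using e Q_r(1)[OF hr[of l]] l by simp
      then show ?thesis using gy l by simp
    qed
  qed
  have y0notin: "y 0 \<notin> r ` {..<N}"
  proof
    assume "y 0 \<in> r ` {..<N}"
    then obtain k where k: "k < N" "r k = y 0" by auto
    then have "Qf a b c (y 0) (y k) = 0" using Q_r(1)[OF hr[OF k(1)]] by simp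
    then show False using gy hy k by (metis N_def zero_less_Suc)
  qed
  have cardR: "card (insert (y 0) (r ` {..<N})) = Suc N"
    using rinj y0notin by (simp add: card_image)
  have sub: "insert (y 0) (r ` {..<N}) \<subseteq> {t. poly pp t = 0}" using ppP Py Pr by auto
  have pp0: "pp = 0"
  proof (rule ccontr)
    assume nz: "pp \<noteq> 0"
    then have "card {t. poly pp t = 0} \<le> N" using card_poly_roots_bound[OF nz] degpp by linarith
    moreover have "card (insert (y 0) (r ` {..<N})) \<le> card {t. poly pp t = 0}"
      by (rule card_mono[OF poly_roots_finite[OF nz] sub])
    ultimately show False using cardR by simp
  qed
  have nz0: "\<forall>l<N. Qf a b c (x 0) (y l) \<noteq> 0" using h unfolding hyp_def y_def N_def by auto
  have "P (x 0) = 0" using ppP[of "x 0"] pp0 by simp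
  then have "(L (x 0) - R (x 0)) * (\<Prod>l<N. Qf a b c (x 0) (y l)) = 0" using PLR[OF nz0] by simp
  moreover have "(\<Prod>l<N. Qf a b c (x 0) (y l)) \<noteq> 0" using nz0 by simp
  ultimately have "L (x 0) = R (x 0)" by simp
  then show ?thesis using expand[of "x 0"] prodR by simp
qed



lemma perturb:
  fixes G :: "complex \<Rightarrow> complex"
  assumes c: "isCont G 0" and e: "\<forall>\<^sub>F s in at 0. G s = 0"
  shows "G 0 = 0"
proof -
  have "(G \<longlongrightarrow> G 0) (at 0)" using c isCont_def by blast
  moreover have "(G \<longlongrightarrow> 0) (at 0)" using e by (rule tendsto_eventually)
  ultimately show ?thesis using tendsto_unique[OF at_neq_bot] by blast
qed

lemma ev_finite:
  fixes z :: complex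
  assumes "finite S" shows "\<forall>\<^sub>F s in at z. s \<notin> S"
proof -
  have "\<forall>\<^sub>F s in at z. \<forall>y\<in>S. s \<noteq> y"
    using assms by (intro eventually_ball_finite) (auto intro: eventually_neq_at_within)
  then show ?thesis by (rule eventually_mono) auto
qed

lemma cont_pf:
  fixes F :: "complex \<Rightarrow> nat \<Rightarrow> nat \<Rightarrow> complex"
  assumes "\<And>i j. i < n \<Longrightarrow> j < n \<Longrightarrow> isCont (\<lambda>s. F s i j) z"
  shows "isCont (\<lambda>s. pfaffian n (F s)) z"
  unfolding pfaffian_def
proof (intro continuous_sum continuous_mult continuous_const continuous_prod)
  fix sg k assume sg: "sg \<in> {sg. canonical_pairing n sg}" and k: "k \<in> {..<n div 2}"
  have sp: "sg permutes {0..<n}" using sg canon_perm by blast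
  have "2*k+1 < n" using k by auto
  then have "sg (2*k) < n" "sg (2*k+1) < n" using permutes_in_image[OF sp] by auto
  then show "isCont (\<lambda>s. F s (sg (2 * k)) (sg (2 * k + 1))) z" using assms by blast
qed

lemma cont_prodp:
  fixes F :: "complex \<Rightarrow> nat \<Rightarrow> nat \<Rightarrow> complex"
  assumes "\<And>i j. i < n \<Longrightarrow> j < n \<Longrightarrow> isCont (\<lambda>s. F s i j) z"
  shows "isCont (\<lambda>s. prodp n (F s)) z"
  unfolding prodp_def
  by (intro continuous_prod) (use assms in auto)

lemma pf0: "pfaffian 0 F = 1"
proof -
  have "{s. canonical_pairing 0 s} = {id}" by (auto simp: canonical_pairing_def permutes_empty)
  then show ?thesis by (simp add: pfaffian_def)
qed

lemma main_ind:
  assumes eps: "(b^2 - a*c)^2 = 1"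
  shows "hyp a b c (2*q) x \<Longrightarrow> pfaffian (2*q) (Fx a b c x) = prodp (2*q) (Fx a b c x)"
proof (induction q arbitrary: x)
  case 0
  then show ?case by (simp add: pf0 prodp_def)
next
  case (Suc q)
  define m where "m = 2*q"
  have m2: "2 * Suc q = Suc (Suc m)" by (simp add: m_def)
  have ev: "even m" by (simp add: m_def)
  have IH: "\<And>y. hyp a b c m y \<Longrightarrow> pfaffian m (Fx a b c y) = prodp m (Fx a b c y)"
    using Suc.IH unfolding m_def by blast
  have h: "hyp a b c (Suc (Suc m)) x" using Suc.prems m2 by simp
  define n where "n = Suc (Suc m)"
  define xs where "xs s i = x i + s * of_nat (Suc i)" for s :: complex and i
  define G where "G s = pfaffian n (Fx a b c (xs s)) - prodp n (Fx a b c (xs s))" for s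
  have b0: "b \<noteq> 0 \<or> a \<noteq> 0" using eps by auto
  have xs0: "xs 0 = x" by (simp add: xs_def fun_eq_iff)
  have contF: "isCont (\<lambda>s. Fx a b c (xs s) i j) 0" if "i < n" "j < n" for i j
  proof (cases "i = j")
    case True
    then show ?thesis by (simp add: Fx_def ff_same)
  next
    case False
    have "Qf a b c (x i) (x j) \<noteq> 0" using h that False unfolding hyp_def n_def by auto
    then show ?thesis unfolding Fx_def ff_def Qf_def xs_def
      by (intro isCont_divide continuous_intros) (simp add: Qf_def)
  qed
  have contG: "isCont G 0" unfolding G_def
    by (intro continuous_intros cont_pf cont_prodp contF)
  have E1: "\<forall>\<^sub>F s in at 0. hyp a b c n (xs s)"
  proof -
    have "\<forall>\<^sub>F s in at 0. \<forall>i\<in>{..<n}. \<forall>j\<in>{..<n}. i \<noteq> j \<longrightarrow> Qf a b c (xs s i) (xs s j) \<noteq> 0"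
    proof (intro eventually_ball_finite ballI finite_lessThan)
      fix i j assume i: "i \<in> {..<n}" and j: "j \<in> {..<n}"
      show "\<forall>\<^sub>F s in at 0. i \<noteq> j \<longrightarrow> Qf a b c (xs s i) (xs s j) \<noteq> 0"
      proof (cases "i = j")
        case False
        have nz: "Qf a b c (x i) (x j) \<noteq> 0" using h i j False unfolding hyp_def n_def by auto
        have "isCont (\<lambda>s. Qf a b c (xs s i) (xs s j)) 0"
          unfolding Qf_def xs_def by (intro continuous_intros)
        then have "((\<lambda>s. Qf a b c (xs s i) (xs s j)) \<longlongrightarrow> Qf a b c (x i) (x j)) (at 0)"
          using isCont_def xs0 by fastforce
        from tendsto_imp_eventually_ne[OF this nz] show ?thesis by (rule eventually_mono) auto
      qed simp
    qed
    then show ?thesis unfolding hyp_def by (rule eventually_mono) auto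
  qed
  have E2: "\<forall>\<^sub>F s in at 0. \<forall>i\<in>{..<n}. b + a * xs s i \<noteq> 0"
  proof (intro eventually_ball_finite ballI finite_lessThan)
    fix i assume i: "i \<in> {..<n}"
    show "\<forall>\<^sub>F s in at 0. b + a * xs s i \<noteq> 0"
    proof (cases "a = 0")
      case True then show ?thesis using b0 by simp
    next
      case False
      have "\<forall>\<^sub>F s in at 0. s \<noteq> - (b + a * x i) / (a * of_nat (Suc i))"
        by (rule eventually_neq_at_within)
      then show ?thesis
      proof (rule eventually_mono)
        fix s assume s: "s \<noteq> - (b + a * x i) / (a * of_nat (Suc i))"
        show "b + a * xs s i \<noteq> 0"
        proof
          assume h0: "b + a * xs s i = 0"
          have e1: "s * (a * of_nat (Suc i)) = a * xs s i - a * x i" unfolding xs_def by (simp add: algebra_simps)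
          have e2: "a * xs s i = - b" using h0 by (simp add: eq_neg_iff_add_eq_0 add.commute)
          have "s * (a * of_nat (Suc i)) = - (b + a * x i)" unfolding e1 e2 by simp
          then have "s = - (b + a * x i) / (a * of_nat (Suc i))" using False
            by (simp add: eq_divide_eq del: of_nat_Suc)
          then show False using s by simp
        qed
      qed
    qed
  qed
  have E3: "\<forall>\<^sub>F s in at 0. \<forall>i\<in>{..<n}. Qf a b c (xs s i) (xs s i) \<noteq> 0"
  proof (intro eventually_ball_finite ballI finite_lessThan)
    fix i assume i: "i \<in> {..<n}"
    define w :: complex where "w = of_nat (Suc i)"
    have w0: "w \<noteq> 0" unfolding w_def by (simp del: of_nat_Suc)
    define qp where "qp = [:Qf a b c (x i) (x i), 2*b*w + 2*a*x i*w, a*w^2:]"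
    have qpv: "poly qp s = Qf a b c (xs s i) (xs s i)" for s
      unfolding qp_def Qf_def xs_def w_def by (simp add: algebra_simps power2_eq_square)
    have qp0: "qp \<noteq> 0"
    proof
      assume "qp = 0"
      then have "a * w^2 = 0" "2*b*w + 2*a*x i*w = 0" unfolding qp_def by simp_all
      then have "a = 0" "b = 0" using w0 by auto
      then show False using eps by simp
    qed
    have "\<forall>\<^sub>F s in at 0. s \<notin> {s. poly qp s = 0}"
      by (rule ev_finite[OF poly_roots_finite[OF qp0]])
    then show "\<forall>\<^sub>F s in at 0. Qf a b c (xs s i) (xs s i) \<noteq> 0"
      by (rule eventually_mono) (simp add: qpv)
  qed
  have E4: "\<forall>\<^sub>F s in at 0. \<forall>i\<in>{..<n}. \<forall>j\<in>{..<n}. i \<noteq> j \<longrightarrow> xs s i \<noteq> xs s j"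
  proof (intro eventually_ball_finite ballI finite_lessThan)
    fix i j assume i: "i \<in> {..<n}" and j: "j \<in> {..<n}"
    show "\<forall>\<^sub>F s in at 0. i \<noteq> j \<longrightarrow> xs s i \<noteq> xs s j"
    proof (cases "i = j")
      case False
      have d: "(of_nat (Suc i) :: complex) - of_nat (Suc j) \<noteq> 0" using False by (simp del: of_nat_Suc)
      have "\<forall>\<^sub>F s in at 0. s \<noteq> (x j - x i) / (of_nat (Suc i) - of_nat (Suc j))"
        by (rule eventually_neq_at_within)
      then show ?thesis
      proof (rule eventually_mono)
        fix s assume s: "s \<noteq> (x j - x i) / (of_nat (Suc i) - of_nat (Suc j))"
        show "i \<noteq> j \<longrightarrow> xs s i \<noteq> xs s j"
        proof (intro impI notI)
          assume "xs s i = xs s j"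
          then have "s * (of_nat (Suc i) - of_nat (Suc j)) = x j - x i"
            unfolding xs_def by (simp add: algebra_simps del: of_nat_Suc)
          then have "s = (x j - x i) / (of_nat (Suc i) - of_nat (Suc j))" using d
            by (simp add: eq_divide_eq del: of_nat_Suc)
          then show False using s by simp
        qed
      qed
    qed simp
  qed
  have "\<forall>\<^sub>F s in at 0. G s = 0"
    using E1 E2 E3 E4
  proof eventually_elim
    case (elim s)
    have "pfaffian (Suc (Suc m)) (Fx a b c (xs s)) = prodp (Suc (Suc m)) (Fx a b c (xs s))"
    proof (rule gen_step[OF eps ev IH])
      show "hyp a b c (Suc (Suc m)) (xs s)" using elim(1) by (simp add: n_def)
      show "\<And>i. i < Suc (Suc m) \<Longrightarrow> b + a * xs s i \<noteq> 0" using elim(2) by (simp add: n_def)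
      show "\<And>i. i < Suc (Suc m) \<Longrightarrow> Qf a b c (xs s i) (xs s i) \<noteq> 0" using elim(3) by (simp add: n_def)
      show "inj_on (xs s) {..<Suc (Suc m)}" using elim(4) unfolding inj_on_def n_def by blast
    qed
    then show ?case by (simp add: G_def n_def)
  qed
  then have "G 0 = 0" by (rule perturb[OF contG])
  then show ?case using m2 xs0 by (simp add: G_def n_def)
qed


theorem mainTheorem11:
  fixes a b c :: complex and n :: nat and x :: "nat \<Rightarrow> complex"
  assumes "b^2 = a*c + 1 \<or> b^2 = a*c - 1"
    and "even n"
    and "\<forall>i<n. \<forall>j<n. i \<noteq> j \<longrightarrow> c + b*(x i + x j) + a*x i*x j \<noteq> 0"
  shows "pfaffian n (\<lambda>i j. (x i - x j) / (c + b*(x i + x j) + a*x i*x j)) =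
         (\<Prod>i<n. \<Prod>j\<in>{i<..<n}. (x i - x j) / (c + b*(x i + x j) + a*x i*x j))"
proof -
  have eps: "(b^2 - a*c)^2 = 1" using assms(1) by auto
  obtain q where q: "n = 2*q" using assms(2) by blast
  have h: "hyp a b c (2*q) x" using assms(3) q unfolding hyp_def Qf_def by simp
  have F: "(\<lambda>i j. (x i - x j) / (c + b*(x i + x j) + a*x i*x j)) = Fx a b c x"
    by (simp add: fun_eq_iff Fx_def ff_def Qf_def)
  have "pfaffian (2*q) (Fx a b c x) = prodp (2*q) (Fx a b c x)" by (rule main_ind[OF eps h])
  then show ?thesis unfolding F q prodp_def by (simp add: Fx_def ff_def Qf_def)
qed

end
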